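(* Let $\mu$ be the invariant self-similar measure of a homogeneous WIFS $(\lambda x+t_i,p_i)_{i\in I}$ with $0<\lambda<1$, supported in $[0,1)$. Let $q>1$ be such that $\alpha=\tau_\mu'(q)$ exists, and write $\tau=\tau_\mu$. (i) For every $\kappa>0$ there is $\eta=\eta(\kappa,q)>0$ such that for all sufficiently large $m$: for every $s\in\mathbb{N}$, every $I\in\mathcal{D}_s$ and every collection $\mathcal{D}'$ of intervals of $\mathcal{D}_{s+m}$ contained in $I$ with $|\mathcal{D}'|\le 2^{(\tau^*(\alpha)-\kappa)m}$, \[ \sum_{J\in\mathcal{D}'}\mu(J)^q\le 2^{-(\tau(q)+\eta)m}\mu(2I)^q . \] (ii) For every $\delta>0$, for all sufficiently large $m$, for every $s\in\mathbb{N}$ and $I\in\mathcal{D}_s$, \[ \sum_{J\in\mathcal{D}_{s+m},\,J\subset I}\mu(J)^q\le 2^{-(\tau(q)-\delta)m}\mu(2I)^q . \]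
   Context: Invariant measure: $\mu=\sum_ip_i\,f_i\mu$ with $f_i(x)=\lambda x+t_i$. Logs base 2. $\mathcal{D}_m=\{[j2^{-m},(j+1)2^{-m}):j\in\mathbb{Z}\}$. For $q>0$, $\tau_\mu(q)=\liminf_{m\to\infty}-\frac1m\log\sum_{J\in\mathcal{D}_m,\mu(J)>0}\mu(J)^q$, and $\tau^*(\alpha)=\inf_{q>0}(\alpha q-\tau(q))$ (the Legendre transform). $2I$ denotes the interval with the same center as $I$ and twice its length. *)

theory Defs
  imports "HOL-Probability.Probability"
begin

definition dyadic :: "nat \<Rightarrow> real set set" where
  "dyadic m = {{real_of_int j / 2 ^ m ..< (real_of_int j + 1) / 2 ^ m} | j. True}"

definition double_int :: "real set \<Rightarrow> real set" where
  "double_int I = {Inf I - (Sup I - Inf I) / 2 ..< Sup I + (Sup I - Inf I) / 2}"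

definition tau_mu :: "real measure \<Rightarrow> real \<Rightarrow> real" where
  "tau_mu \<mu> q = real_of_ereal (liminf (\<lambda>m::nat. ereal (- log 2
      (\<Sum>J\<in>{J\<in>dyadic m. measure \<mu> J > 0}. measure \<mu> J powr q) / real m)))"

definition legendre :: "(real \<Rightarrow> real) \<Rightarrow> real \<Rightarrow> real" where
  "legendre \<tau> \<alpha> = (INF q\<in>{0<..}. \<alpha> * q - \<tau> q)"

end

theory Submission
  imports Defs
begin

definition DI :: "nat \<Rightarrow> int \<Rightarrow> real set" where
  "DI n j = {real_of_int j / 2 ^ n ..< (real_of_int j + 1) / 2 ^ n}"

lemma dyadic_eq: "dyadic n = range (DI n)"
  unfolding dyadic_def DI_def by auto

lemma DI_mem: "x \<in> DI n j \<longleftrightarrow> real_of_int j \<le> x * 2^n \<and> x * 2^n < real_of_int j + 1"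
  unfolding DI_def by (auto simp: field_simps)

lemma DI_floor: "x \<in> DI n j \<longleftrightarrow> j = \<lfloor>x * 2^n\<rfloor>"
  unfolding DI_mem by (metis floor_eq_iff floor_unique)

lemma DI_left: "real_of_int j / 2^n \<in> DI n j"
  unfolding DI_def by (auto simp: divide_strict_right_mono)

lemma DI_inj: "inj (DI n)"
proof
  fix i j assume "DI n i = DI n j"
  then have "real_of_int i / 2^n \<in> DI n j" using DI_left by metis
  then show "i = j" unfolding DI_floor by simp
qed

lemma DI_disj: "i \<noteq> j \<Longrightarrow> DI n i \<inter> DI n j = {}"
  by (auto simp: DI_floor)

lemma DI_borel[measurable]: "DI n j \<in> sets borel"
  unfolding DI_def by simp

lemma UN_DI: "(\<Union>j\<in>{0..<(2::int)^n}. DI n j) = {0..<1}"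
proof (intro equalityI subsetI)
  fix x assume "x \<in> (\<Union>j\<in>{0..<(2::int)^n}. DI n j)"
  then obtain j where j: "0 \<le> j" "j < 2^n" "x \<in> DI n j" by auto
  then have "real_of_int j \<le> x * 2^n" "x * 2^n < real_of_int j + 1" by (auto simp: DI_mem)
  moreover have "j + 1 \<le> 2^n" using j(2) by simp
  then have "real_of_int (j + 1) \<le> real_of_int (2^n)" by (simp only: of_int_le_iff)
  then have "real_of_int j + 1 \<le> 2^n" by simp
  moreover have "(0::real) \<le> real_of_int j" using j by simp
  ultimately have a: "0 \<le> x * 2^n" and b: "x * 2^n < 1 * 2^n" by linarith+
  have "(0::real) < 2^n" by simp
  with a have "0 \<le> x" by (simp add: zero_le_mult_iff)
  moreover from b have "x < 1" using mult_less_cancel_right_pos[of "2^n" x 1] by simp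
  ultimately show "x \<in> {0..<1}" by simp
next
  fix x :: real assume x: "x \<in> {0..<1}"
  define j where "j = \<lfloor>x * 2^n\<rfloor>"
  have "x \<in> DI n j" by (simp add: DI_floor j_def)
  moreover have "0 \<le> j" using x by (simp add: j_def)
  moreover have "x * 2^n < 2^n" using x by simp
  then have "j < 2^n" unfolding j_def floor_less_iff by simp
  ultimately show "x \<in> (\<Union>j\<in>{0..<(2::int)^n}. DI n j)" by auto
qed

fun Fw :: "real \<Rightarrow> ('i \<Rightarrow> real) \<Rightarrow> 'i list \<Rightarrow> real \<Rightarrow> real" where
  "Fw l t [] x = x"
| "Fw l t (i # w) x = Fw l t w (l * x + t i)"

lemma Fw_affine: "Fw l t w x = l ^ length w * x + Fw l t w 0"
proof (induction w arbitrary: x)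
  case Nil then show ?case by simp
next
  case (Cons i w)
  have a: "Fw l t (i#w) x = l ^ length w * (l * x + t i) + Fw l t w 0" using Cons.IH[of "l * x + t i"] by simp
  have b: "Fw l t (i#w) 0 = l ^ length w * t i + Fw l t w 0" using Cons.IH[of "t i"] by simp
  show ?case unfolding a b by (simp add: algebra_simps)
qed

lemma Fw_meas: "Fw l t w \<in> borel_measurable borel"
proof -
  have "Fw l t w = (\<lambda>x. l ^ length w * x + Fw l t w 0)" by (rule ext, rule Fw_affine)
  also have "\<dots> \<in> borel_measurable borel" by measurable
  finally show ?thesis .
qed

lemma Fw_vimage_borel: assumes "A \<in> sets borel" shows "Fw l t w -` A \<in> sets borel"
proof -
  have "Fw l t w -` A \<inter> space borel \<in> sets borel" by (rule measurable_sets[OF Fw_meas assms])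
  then show ?thesis by simp
qed

lemma convex_powr0: assumes "q \<ge> 1" shows "convex_on {0::real..} (\<lambda>x. x powr q)"
  unfolding convex_on_def
proof (intro conjI ballI allI impI)
  show "convex {0::real..}" by simp
  have pc: "\<forall>x\<in>{0<..}. \<forall>y\<in>{0<..}. \<forall>u\<ge>0. \<forall>v\<ge>0. u + v = 1 \<longrightarrow>
      (u *\<^sub>R x + v *\<^sub>R y) powr q \<le> u * x powr q + v * y powr q"
    using powr_convex[OF assms] unfolding convex_on_def by blast
  have small: "(v * y) powr q \<le> v * y powr q" if "0 \<le> v" "v \<le> 1" "0 \<le> y" for v y :: real
  proof (cases "v = 0 \<or> y = 0")
    case True then show ?thesis by auto
  next
    case False
    then have "v > 0" "y > 0" using that by auto
    then have "(v * y) powr q = v powr q * y powr q" by (simp add: powr_mult)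
    also have "\<dots> \<le> v * y powr q"
      using powr_le_one_le[of v q] that assms \<open>v > 0\<close> by (intro mult_right_mono) auto
    finally show ?thesis .
  qed
  fix x y u v :: real assume x: "x \<in> {0..}" and y: "y \<in> {0..}" and u: "0 \<le> u" and v: "0 \<le> v" and uv: "u + v = 1"
  show "(u *\<^sub>R x + v *\<^sub>R y) powr q \<le> u * x powr q + v * y powr q"
  proof (cases "x = 0")
    case True
    then show ?thesis using small[of v y] u v uv y by simp
  next
    case xn: False
    show ?thesis
    proof (cases "y = 0")
      case True
      then show ?thesis using small[of u x] u v uv x by simp
    next
      case False
      then show ?thesis using pc xn x y u v uv by auto
    qed
  qed
qed

lemma jensen_powr:
  fixes P y :: "'a \<Rightarrow> real"
  assumes R: "finite R" and P: "\<And>i. i \<in> R \<Longrightarrow> P i \<ge> 0" and y: "\<And>i. i \<in> R \<Longrightarrow> y i \<ge> 0" and q: "q \<ge> 1"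
  shows "(\<Sum>i\<in>R. P i * y i) powr q \<le> (\<Sum>i\<in>R. P i) powr (q - 1) * (\<Sum>i\<in>R. P i * y i powr q)"
proof (cases "(\<Sum>i\<in>R. P i) = 0")
  case True
  then have "\<forall>i\<in>R. P i = 0" using sum_nonneg_eq_0_iff[OF R] P by blast
  then show ?thesis by simp
next
  case False
  define T where "T = (\<Sum>i\<in>R. P i)"
  have T: "T > 0" using False P sum_nonneg[of R P] by (simp add: T_def order_less_le)
  have Rne: "R \<noteq> {}" using False by auto
  have "(\<Sum>i\<in>R. (P i / T) *\<^sub>R y i) powr q \<le> (\<Sum>i\<in>R. (P i / T) * y i powr q)"
  proof (rule convex_on_sum[OF R Rne convex_powr0[OF q]])
    show "(\<Sum>i\<in>R. P i / T) = 1" using T by (simp add: T_def sum_divide_distrib[symmetric])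
  qed (use P y T in auto)
  moreover have "(\<Sum>i\<in>R. (P i / T) *\<^sub>R y i) = (\<Sum>i\<in>R. P i * y i) / T"
    by (simp add: sum_divide_distrib)
  moreover have "(\<Sum>i\<in>R. (P i / T) * y i powr q) = (\<Sum>i\<in>R. P i * y i powr q) / T"
    by (simp add: sum_divide_distrib)
  ultimately have "((\<Sum>i\<in>R. P i * y i) / T) powr q \<le> (\<Sum>i\<in>R. P i * y i powr q) / T" by simp
  moreover have "((\<Sum>i\<in>R. P i * y i) / T) powr q = (\<Sum>i\<in>R. P i * y i) powr q / T powr q"
    using T P y by (intro powr_divide)
  ultimately have "(\<Sum>i\<in>R. P i * y i) powr q \<le> T powr q * ((\<Sum>i\<in>R. P i * y i powr q) / T)"
    using T by (simp add: divide_le_eq mult.commute)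
  also have "\<dots> = (T powr q / T) * (\<Sum>i\<in>R. P i * y i powr q)" by simp
  also have "T powr q / T = T powr (q - 1)" using T by (simp add: powr_diff)
  finally show ?thesis by (simp add: T_def)
qed

lemma fiber_card:
  fixes \<kappa> :: "int \<Rightarrow> int" and M :: int
  assumes K: "finite K" and M: "\<And>i j. i \<in> K \<Longrightarrow> j \<in> K \<Longrightarrow> \<kappa> i = \<kappa> j \<Longrightarrow> i \<le> j \<Longrightarrow> j - i < M"
  shows "card {j\<in>K. \<kappa> j = k} \<le> nat M"
proof (cases "{j\<in>K. \<kappa> j = k} = {}")
  case True then show ?thesis unfolding True by simp
next
  case False
  define F where "F = {j\<in>K. \<kappa> j = k}"
  have F: "finite F" "F \<noteq> {}" using K False by (auto simp: F_def)
  define a where "a = Min F"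
  have aF: "a \<in> F" using F by (simp add: a_def)
  have "F \<subseteq> {a..<a+M}"
  proof
    fix j assume j: "j \<in> F"
    have "a \<le> j" using F j by (simp add: a_def)
    moreover have "j - a < M" using M[of a j] aF j \<open>a \<le> j\<close> by (auto simp: F_def)
    ultimately show "j \<in> {a..<a+M}" by simp
  qed
  then have "card F \<le> card {a..<a+M}" by (intro card_mono) auto
  then show ?thesis by (simp add: F_def)
qed

lemma fiber_sum:
  fixes \<kappa> :: "'a \<Rightarrow> 'b" and f :: "'b \<Rightarrow> real"
  assumes K: "finite K" and f: "\<And>k. f k \<ge> 0" and N: "\<And>k. card {j\<in>K. \<kappa> j = k} \<le> N"
  shows "(\<Sum>j\<in>K. f (\<kappa> j)) \<le> real N * (\<Sum>k\<in>\<kappa> ` K. f k)"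
proof -
  have "(\<Sum>j\<in>K. f (\<kappa> j)) = (\<Sum>k\<in>\<kappa> ` K. \<Sum>j\<in>{j\<in>K. \<kappa> j = k}. f (\<kappa> j))"
    by (rule sum.image_gen[OF K])
  also have "\<dots> = (\<Sum>k\<in>\<kappa> ` K. real (card {j\<in>K. \<kappa> j = k}) * f k)"
    by (rule sum.cong[OF refl]) simp
  also have "\<dots> \<le> (\<Sum>k\<in>\<kappa> ` K. real N * f k)"
    by (rule sum_mono) (use N f in \<open>auto intro!: mult_right_mono\<close>)
  also have "\<dots> = real N * (\<Sum>k\<in>\<kappa> ` K. f k)" by (simp add: sum_distrib_left)
  finally show ?thesis .
qed

lemma powr_sum2: fixes y z q :: real assumes "0 \<le> y" "0 \<le> z" "0 \<le> q" shows "(y + z) powr q \<le> 2 powr q * (y powr q + z powr q)"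
proof -
  have "(y + z) powr q \<le> (2 * max y z) powr q" by (rule powr_mono2) (use assms in auto)
  also have "\<dots> = 2 powr q * max y z powr q" using assms by (simp add: powr_mult)
  also have "\<dots> \<le> 2 powr q * (y powr q + z powr q)"
    by (intro mult_left_mono) (auto simp: max_def)
  finally show ?thesis .
qed

locale wifs =
  fixes \<mu> :: "real measure" and Idx :: "'i set" and p t :: "'i \<Rightarrow> real" and lam :: real
  assumes Idx: "finite Idx" "Idx \<noteq> {}"
    and p_pos: "\<And>i. i \<in> Idx \<Longrightarrow> p i > 0"
    and p_sum: "(\<Sum>i\<in>Idx. p i) = 1"
    and lam: "0 < lam" "lam < 1"
    and probsp: "prob_space \<mu>" and sets_eq: "sets \<mu> = sets borel"
    and inv: "\<And>A. A \<in> sets borel \<Longrightarrow>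
               measure \<mu> A = (\<Sum>i\<in>Idx. p i * measure \<mu> ((\<lambda>x. lam * x + t i) -` A))"
    and supp: "measure \<mu> {0..<1} = 1"
begin

sublocale P: prob_space \<mu> by (rule probsp)

lemma space_eq: "space \<mu> = UNIV"
  using sets_eq_imp_space_eq[OF sets_eq] by simp

lemma msets: "A \<in> sets borel \<Longrightarrow> A \<in> sets \<mu>"
  using sets_eq by simp

lemma mnn: "0 \<le> measure \<mu> A" by simp

lemma mle1: "measure \<mu> A \<le> 1" by simp

lemma compl0: "measure \<mu> (UNIV - {0..<1}) = 0"
  using P.prob_compl[of "{0..<1}"] msets supp space_eq by simp

lemma restrict01: assumes "A \<in> sets borel" shows "measure \<mu> A = measure \<mu> (A \<inter> {0..<1})"
proof -
  have "measure \<mu> (A - {0..<1}) \<le> measure \<mu> (UNIV - {0..<1})"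
    by (rule P.finite_measure_mono) (auto intro: msets)
  then have "measure \<mu> (A - {0..<1}) = 0" using compl0 by (simp add: antisym)
  moreover have "measure \<mu> (A - {0..<1}) = measure \<mu> A - measure \<mu> (A \<inter> {0..<1})"
    by (rule P.finite_measure_Diff') (auto intro: msets assms)
  ultimately show ?thesis by simp
qed

lemma null_outside: "A \<in> sets borel \<Longrightarrow> A \<inter> {0..<1} = {} \<Longrightarrow> measure \<mu> A = 0"
  using restrict01 by simp

lemma sum_DI: "(\<Sum>j\<in>{0..<(2::int)^n}. measure \<mu> (DI n j)) = 1"
proof -
  have "measure \<mu> (\<Union>j\<in>{0..<(2::int)^n}. DI n j) = (\<Sum>j\<in>{0..<(2::int)^n}. measure \<mu> (DI n j))"
    by (rule P.finite_measure_finite_Union) (auto intro: msets simp: disjoint_family_on_def DI_disj)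
  then show ?thesis using UN_DI supp by simp
qed

lemma DI_pos_range: assumes "measure \<mu> (DI n j) > 0" shows "j \<in> {0..<2^n}"
proof -
  have "DI n j \<inter> {0..<1} \<noteq> {}" using null_outside[of "DI n j"] assms by auto
  then obtain x where x: "x \<in> DI n j" "x \<in> {0..<1}" by blast
  then obtain j' where j': "j' \<in> {0..<2^n}" "x \<in> DI n j'" using UN_DI[of n] by blast
  have "j = j'" using x(1) j'(2) by (simp add: DI_floor)
  then show ?thesis using j' by simp
qed

definition Pos :: "nat \<Rightarrow> real set set" where
  "Pos n = {J\<in>dyadic n. measure \<mu> J > 0}"

definition S :: "nat \<Rightarrow> real \<Rightarrow> real" where
  "S n x = (\<Sum>J\<in>Pos n. measure \<mu> J powr x)"

definition g :: "nat \<Rightarrow> real \<Rightarrow> real" where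
  "g n x = - log 2 (S n x) / real n"

lemma tau_eq: "tau_mu \<mu> x = real_of_ereal (liminf (\<lambda>n. ereal (g n x)))"
  unfolding tau_mu_def g_def S_def Pos_def by simp

lemma Pos_eq: "Pos n = DI n ` {j\<in>{0..<2^n}. measure \<mu> (DI n j) > 0}"
  unfolding Pos_def dyadic_eq using DI_pos_range by auto

lemma finite_Pos: "finite (Pos n)"
  unfolding Pos_eq by (rule finite_imageI) (rule finite_subset[of _ "{0..<2^n}"], auto)

lemma S_alt: "S n x = (\<Sum>j\<in>{0..<(2::int)^n}. measure \<mu> (DI n j) powr x)"
proof -
  have "S n x = (\<Sum>j\<in>{j\<in>{0..<2^n}. measure \<mu> (DI n j) > 0}. measure \<mu> (DI n j) powr x)"
    unfolding S_def Pos_eq by (subst sum.reindex) (auto intro: inj_on_subset[OF DI_inj])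
  also have "\<dots> = (\<Sum>j\<in>{0..<(2::int)^n}. measure \<mu> (DI n j) powr x)"
  proof (rule sum.mono_neutral_left)
    show "\<forall>i\<in>{0..<2 ^ n} - {j \<in> {0..<2 ^ n}. 0 < measure \<mu> (DI n j)}. measure \<mu> (DI n i) powr x = 0"
    proof
      fix i assume "i \<in> {0..<2 ^ n} - {j \<in> {0..<2 ^ n}. 0 < measure \<mu> (DI n j)}"
      then have "measure \<mu> (DI n i) = 0" using measure_nonneg[of \<mu> "DI n i"] by auto
      then show "measure \<mu> (DI n i) powr x = 0" by simp
    qed
  qed auto
  finally show ?thesis .
qed

lemma big_DI: "\<exists>j\<in>{0..<(2::int)^n}. measure \<mu> (DI n j) \<ge> 1 / 2^n"
proof (rule ccontr)
  assume "\<not> ?thesis"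
  then have "\<forall>j\<in>{0..<(2::int)^n}. measure \<mu> (DI n j) < 1 / 2^n" by auto
  then have "(\<Sum>j\<in>{0..<(2::int)^n}. measure \<mu> (DI n j)) < (\<Sum>j\<in>{0..<(2::int)^n}. 1 / 2^n)"
    by (intro sum_strict_mono) auto
  also have "\<dots> = 1" by simp
  finally show False using sum_DI by simp
qed

lemma S_upper: assumes "x \<ge> 0" shows "S n x \<le> 2^n"
proof -
  have "S n x \<le> (\<Sum>j\<in>{0..<(2::int)^n}. 1)"
    unfolding S_alt by (intro sum_mono) (auto intro!: powr_le1 simp: assms)
  then show ?thesis by simp
qed

lemma S_upper1: assumes "x \<ge> 1" shows "S n x \<le> 1"
proof -
  have "S n x \<le> (\<Sum>j\<in>{0..<(2::int)^n}. measure \<mu> (DI n j))"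
    unfolding S_alt
  proof (intro sum_mono)
    fix j show "measure \<mu> (DI n j) powr x \<le> measure \<mu> (DI n j)"
    proof (cases "measure \<mu> (DI n j) = 0")
      case False
      then have "measure \<mu> (DI n j) > 0" using measure_nonneg[of \<mu> "DI n j"] by linarith
      then show ?thesis using powr_le_one_le[of "measure \<mu> (DI n j)" x] assms by simp
    qed simp
  qed
  then show ?thesis using sum_DI by simp
qed

lemma S_lower: assumes "x \<ge> 0" shows "S n x \<ge> (1/2^n) powr x"
proof -
  obtain j where j: "j \<in> {0..<(2::int)^n}" "measure \<mu> (DI n j) \<ge> 1 / 2^n" using big_DI by blast
  have "(1/2^n) powr x \<le> measure \<mu> (DI n j) powr x" by (rule powr_mono2) (use assms j in auto)
  also have "\<dots> \<le> S n x" unfolding S_alt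
    by (rule member_le_sum) (use j in auto)
  finally show ?thesis .
qed

lemma S_pos: assumes "x \<ge> 0" shows "S n x > 0"
  using S_lower[OF assms] by (smt (verit) powr_gt_zero zero_less_divide_1_iff zero_less_power)


lemma log_S_upper: assumes "x \<ge> 0" shows "log 2 (S n x) \<le> real n"
proof -
  have "S n x \<le> 2 powr real n" using S_upper[OF assms, of n] by (simp add: powr_realpow)
  then have "log 2 (S n x) \<le> log 2 (2 powr real n)"
    using S_pos[OF assms, of n] by (subst log_le_cancel_iff) auto
  then show ?thesis by simp
qed

lemma log_S_lower: assumes "x \<ge> 0" shows "log 2 (S n x) \<ge> - (real n * x)"
proof -
  have e: "(1/2^n) powr x = 2 powr (- (real n * x))"
    by (simp add: powr_realpow[symmetric] powr_powr powr_minus_divide[symmetric] divide_powr_uminus)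
  have "log 2 (2 powr (- (real n * x))) \<le> log 2 (S n x)"
    using S_lower[OF assms, of n] S_pos[OF assms, of n] unfolding e by (subst log_le_cancel_iff) auto
  then show ?thesis by simp
qed

lemma g_bounds: assumes "x > 0" shows "-1 \<le> g n x" "g n x \<le> x"
proof -
  have "-1 \<le> g n x \<and> g n x \<le> x"
  proof (cases "n = 0")
    case True then show ?thesis using assms by (simp add: g_def)
  next
    case False
    then have n: "real n > 0" by simp
    have u: "log 2 (S n x) \<le> real n" and l: "log 2 (S n x) \<ge> - (real n * x)"
      using log_S_upper log_S_lower assms by auto
    have "-1 \<le> - log 2 (S n x) / real n" using u n by (simp add: field_simps)
    moreover have "- log 2 (S n x) / real n \<le> x" using l n by (simp add: field_simps)
    ultimately show ?thesis by (simp add: g_def)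
  qed
  then show "-1 \<le> g n x" "g n x \<le> x" by auto
qed

lemma g_nonneg: assumes "x \<ge> 1" shows "0 \<le> g n x"
proof -
  have "log 2 (S n x) \<le> 0" using S_upper1[OF assms, of n] S_pos[of x n] assms by simp
  then show ?thesis by (simp add: g_def divide_nonpos_nonneg)
qed

lemma tau_ereal: assumes "x > 0" shows "ereal (tau_mu \<mu> x) = liminf (\<lambda>n. ereal (g n x))"
proof -
  define L where "L = liminf (\<lambda>n. ereal (g n x))"
  have "ereal (-1) \<le> L" unfolding L_def
    by (rule Liminf_bounded) (use g_bounds[OF assms] in auto)
  moreover have "L \<le> ereal x" unfolding L_def
    by (rule Liminf_le) (use g_bounds[OF assms] in auto)
  ultimately have "\<bar>L\<bar> \<noteq> \<infinity>" by auto
  then show ?thesis unfolding tau_eq L_def[symmetric] by (simp add: ereal_real)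
qed

lemma tau_ev: assumes "x > 0" "\<delta> > 0" shows "\<forall>\<^sub>F n in sequentially. g n x > tau_mu \<mu> x - \<delta>"
proof -
  have "ereal (tau_mu \<mu> x - \<delta>) < liminf (\<lambda>n. ereal (g n x))"
    unfolding tau_ereal[OF assms(1), symmetric] using assms by simp
  from less_LiminfD[OF this] show ?thesis by simp
qed

lemma tau_freq: assumes "x > 0" "\<delta> > 0" shows "\<exists>\<^sub>F n in sequentially. g n x < tau_mu \<mu> x + \<delta>"
proof (rule ccontr)
  assume "\<not> ?thesis"
  then have "\<forall>\<^sub>F n in sequentially. ereal (tau_mu \<mu> x + \<delta>) \<le> ereal (g n x)"
    unfolding frequently_def by (auto elim: eventually_mono)
  then have "ereal (tau_mu \<mu> x + \<delta>) \<le> liminf (\<lambda>n. ereal (g n x))"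
    by (rule Liminf_bounded)
  then show False unfolding tau_ereal[OF assms(1), symmetric] using assms by simp
qed

lemma tau_le: assumes "x > 0" "\<And>\<delta>. \<delta> > 0 \<Longrightarrow> \<exists>\<^sub>F n in sequentially. g n x < r + \<delta>"
  shows "tau_mu \<mu> x \<le> r"
proof (rule ccontr)
  assume "\<not> ?thesis"
  then have d: "(tau_mu \<mu> x - r) / 2 > 0" by simp
  have "\<exists>\<^sub>F n in sequentially. g n x < r + (tau_mu \<mu> x - r) / 2" by (rule assms(2)[OF d])
  moreover have "\<forall>\<^sub>F n in sequentially. g n x > tau_mu \<mu> x - (tau_mu \<mu> x - r) / 2"
    by (rule tau_ev[OF assms(1) d])
  ultimately have "\<exists>\<^sub>F n in sequentially. g n x < r + (tau_mu \<mu> x - r) / 2 \<and> g n x > tau_mu \<mu> x - (tau_mu \<mu> x - r) / 2"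
    by (rule frequently_eventually_frequently)
  then have "\<exists>\<^sub>F n in sequentially. False"
  proof (rule frequently_elim1)
    fix n assume "g n x < r + (tau_mu \<mu> x - r) / 2 \<and> g n x > tau_mu \<mu> x - (tau_mu \<mu> x - r) / 2"
    then have "2 * g n x < r + tau_mu \<mu> x \<and> r + tau_mu \<mu> x < 2 * g n x" by (simp add: field_simps)
    then show False using less_asym by blast
  qed
  then show False by simp
qed

lemma holder_S: assumes "0 < a" "a < b" "b < c"
  shows "S n b \<le> S n a powr ((c-b)/(c-a)) * S n c powr ((b-a)/(c-a))"
proof -
  define th where "th = (c-b)/(c-a)"
  have th: "0 \<le> th" "0 \<le> 1 - th" "th + (1 - th) = 1" using assms by (auto simp: th_def)
  have ca: "c - a \<noteq> 0" using assms by simp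
  have th2: "(b-a)/(c-a) = 1 - th" using ca by (simp add: th_def field_simps)
  have "th * (c - a) = c - b" using ca by (simp add: th_def)
  then have e: "th * c - th * a = c - b" by (simp add: algebra_simps)
  have "th * a + (1 - th) * c = c - (th * c - th * a)" by (simp add: algebra_simps)
  then have bth: "b = th * a + (1 - th) * c" using e by simp
  define A where "A = S n a"
  define C where "C = S n c"
  have A: "A > 0" and C: "C > 0" using S_pos assms by (auto simp: A_def C_def)
  define G where "G = A powr th * C powr (1 - th)"
  have G: "G > 0" using A C by (simp add: G_def)
  have "(\<Sum>J\<in>Pos n. measure \<mu> J powr b / G) \<le> (\<Sum>J\<in>Pos n. th * (measure \<mu> J powr a / A) + (1 - th) * (measure \<mu> J powr c / C))"
  proof (rule sum_mono)
    fix J assume "J \<in> Pos n"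
    then have m: "measure \<mu> J > 0" by (simp add: Pos_def)
    define mm where "mm = measure \<mu> J"
    have mm: "mm > 0" using m by (simp add: mm_def)
    have X: "a*th + c*(1-th) = b" using bth by (simp add: algebra_simps)
    have "mm powr b = mm powr (a*th + c*(1-th))" unfolding X ..
    also have "\<dots> = mm powr (a*th) * mm powr (c*(1-th))" by (rule powr_add)
    finally have pb: "mm powr b = mm powr (a*th) * mm powr (c*(1-th))" .
    have "(mm powr a / A) powr th * (mm powr c / C) powr (1 - th)
        = (mm powr (a*th) / A powr th) * (mm powr (c*(1-th)) / C powr (1 - th))"
      using mm A C by (simp add: powr_divide powr_powr)
    also have "\<dots> = mm powr b / G" unfolding pb G_def by simp
    finally have "measure \<mu> J powr b / G = (measure \<mu> J powr a / A) powr th * (measure \<mu> J powr c / C) powr (1 - th)"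
      by (simp add: mm_def)
    also have "\<dots> \<le> th * (measure \<mu> J powr a / A) + (1 - th) * (measure \<mu> J powr c / C)"
      by (rule Youngs_inequality_0) (use th m A C in auto)
    finally show "measure \<mu> J powr b / G \<le> th * (measure \<mu> J powr a / A) + (1 - th) * (measure \<mu> J powr c / C)" .
  qed
  also have "\<dots> = th * (S n a / A) + (1 - th) * (S n c / C)"
    by (simp add: sum.distrib sum_distrib_left sum_divide_distrib S_def)
  also have "\<dots> = 1" using A C th by (simp add: A_def C_def)
  finally have "S n b / G \<le> 1" by (simp add: S_def sum_divide_distrib)
  then have "S n b \<le> G" using G by simp
  then show ?thesis by (simp add: G_def A_def C_def th2 th_def)
qed

lemma g_concave: assumes "0 < a" "a < b" "b < c"
  shows "(c-b) * g n a + (b-a) * g n c \<le> (c-a) * g n b"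
proof -
  have A: "S n a > 0" and B: "S n b > 0" and C: "S n c > 0" using S_pos assms by auto
  have "log 2 (S n b) \<le> log 2 (S n a powr ((c-b)/(c-a)) * S n c powr ((b-a)/(c-a)))"
    using holder_S[OF assms, of n] A B C by simp
  also have "\<dots> = (c-b)/(c-a) * log 2 (S n a) + (b-a)/(c-a) * log 2 (S n c)"
    using A C by (simp add: log_mult log_powr)
  finally have "(c-a) * log 2 (S n b) \<le> (c-a) * ((c-b)/(c-a) * log 2 (S n a) + (b-a)/(c-a) * log 2 (S n c))"
    using assms by (intro mult_left_mono) auto
  also have "\<dots> = ((c-a) * ((c-b)/(c-a))) * log 2 (S n a) + ((c-a) * ((b-a)/(c-a))) * log 2 (S n c)"
    by (simp add: algebra_simps)
  also have "\<dots> = (c-b) * log 2 (S n a) + (b-a) * log 2 (S n c)"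
    using assms by simp
  finally have "(c-a) * log 2 (S n b) \<le> (c-b) * log 2 (S n a) + (b-a) * log 2 (S n c)" .
  note key = this
  show ?thesis
  proof (cases "n = 0")
    case True then show ?thesis by (simp add: g_def)
  next
    case False
    define k where "k = real n"
    have k: "k > 0" using False by (simp add: k_def)
    have gk: "k * g n x = - log 2 (S n x)" for x using k by (simp add: g_def k_def)
    have "k * ((c-b) * g n a + (b-a) * g n c) = (c-b) * (k * g n a) + (b-a) * (k * g n c)"
      by (simp add: algebra_simps)
    also have "\<dots> \<le> (c-a) * (k * g n b)" unfolding gk using key by simp
    also have "\<dots> = k * ((c-a) * g n b)" by (simp add: algebra_simps)
    finally show ?thesis using k by simp
  qed
qed

lemma tau_concave: assumes "0 < a" "a < b" "b < c"
  shows "(c-b) * tau_mu \<mu> a + (b-a) * tau_mu \<mu> c \<le> (c-a) * tau_mu \<mu> b"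
proof -
  define r where "r = ((c-a) * tau_mu \<mu> b - (c-b) * tau_mu \<mu> a) / (b-a)"
  have hr: "(b-a) * r = (c-a) * tau_mu \<mu> b - (c-b) * tau_mu \<mu> a" using assms by (simp add: r_def)
  have "tau_mu \<mu> c \<le> r"
  proof (rule tau_le)
    show "c > 0" using assms by simp
    fix \<delta> :: real assume d: "\<delta> > 0"
    define e where "e = \<delta> * (b-a) / (2*c-a-b)"
    have e: "e > 0" using d assms by (simp add: e_def)
    have nz: "2*c-a-b \<noteq> 0" using assms by simp
    have he: "(2*c-a-b) * e = \<delta> * (b-a)" using nz by (simp add: e_def)
    have "\<exists>\<^sub>F n in sequentially. g n b < tau_mu \<mu> b + e" by (rule tau_freq) (use assms e in auto)
    moreover have "\<forall>\<^sub>F n in sequentially. g n a > tau_mu \<mu> a - e" by (rule tau_ev) (use assms e in auto)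
    ultimately show "\<exists>\<^sub>F n in sequentially. g n c < r + \<delta>"
    proof (rule frequently_rev_mp[OF _ eventually_mono])
      fix n assume h1: "g n a > tau_mu \<mu> a - e"
      show "g n b < tau_mu \<mu> b + e \<longrightarrow> g n c < r + \<delta>"
      proof
        assume h2: "g n b < tau_mu \<mu> b + e"
        have cc: "(c-b) * g n a + (b-a) * g n c \<le> (c-a) * g n b" by (rule g_concave[OF assms])
        have "(c-a) * g n b < (c-a) * (tau_mu \<mu> b + e)" using h2 assms by simp
        moreover have "(c-b) * (tau_mu \<mu> a - e) < (c-b) * g n a" using h1 assms by simp
        ultimately have "(b-a) * g n c < (c-a) * (tau_mu \<mu> b + e) - (c-b) * (tau_mu \<mu> a - e)"
          using cc by linarith
        also have "\<dots> = ((c-a) * tau_mu \<mu> b - (c-b) * tau_mu \<mu> a) + (2*c-a-b) * e"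
          by (simp add: algebra_simps)
        also have "\<dots> = (b-a) * r + \<delta> * (b-a)" using hr he by simp
        also have "\<dots> = (b-a) * (r + \<delta>)" by (simp add: algebra_simps)
        finally show "g n c < r + \<delta>" using assms by simp
      qed
    qed
  qed
  then have "(b-a) * tau_mu \<mu> c \<le> (b-a) * r" using assms by (intro mult_left_mono) auto
  then show ?thesis using hr by linarith
qed


lemma tau_support:
  assumes q: "q > 0" and d: "(tau_mu \<mu> has_real_derivative \<alpha>) (at q)" and x: "x > 0"
  shows "tau_mu \<mu> x \<le> tau_mu \<mu> q + \<alpha> * (x - q)"
proof -
  define T where "T = tau_mu \<mu>"
  define D where "D = (\<lambda>h. (T (q + h) - T q) / h)"
  have lim: "(D \<longlongrightarrow> \<alpha>) (at 0)" using d unfolding DERIV_def D_def T_def by simp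
  have lim2: "((\<lambda>h. T q + (x - q) * D h) \<longlongrightarrow> T q + (x - q) * \<alpha>) (at 0)"
    by (intro tendsto_add tendsto_mult tendsto_const lim)
  have E: "h * (T q + (x-q) * D h) = h * T q + (x-q) * (T (q+h) - T q)" if h: "h \<noteq> 0" for h
  proof -
    have hD: "h * D h = T (q+h) - T q" using h by (simp add: D_def)
    have "h * (T q + (x-q) * D h) = h * T q + (x-q) * (h * D h)" by (simp add: algebra_simps)
    also have "\<dots> = h * T q + (x-q) * (T (q+h) - T q)" by (simp only: hD)
    finally show ?thesis .
  qed
  consider "x = q" | "x > q" | "x < q" by linarith
  then show ?thesis
  proof cases
    case 1 then show ?thesis by simp
  next
    case 2
    have ev: "\<forall>\<^sub>F h in at_left 0. T x \<le> T q + (x - q) * D h"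
      unfolding eventually_at_left_field
    proof (intro exI[of _ "-q"] conjI allI impI)
      show "-q < 0" using q by simp
      fix h :: real assume h1: "-q < h" and h2: "h < 0"
      have conc: "(x - q) * T (q+h) + (q - (q+h)) * T x \<le> (x - (q+h)) * T q"
        unfolding T_def by (rule tau_concave) (use h1 h2 2 in auto)
      have "(-h) * T x \<le> - (h * T q + (x-q) * (T (q+h) - T q))"
        using conc by (simp add: algebra_simps)
      also have "\<dots> = (-h) * (T q + (x - q) * D h)" using E[of h] h2 by simp
      finally show "T x \<le> T q + (x - q) * D h" using h2 by simp
    qed
    have "T x \<le> T q + (x - q) * \<alpha>"
      by (rule tendsto_le[OF _ _ tendsto_const ev]) (use lim2 filterlim_at_split in auto)
    then show ?thesis by (simp add: T_def algebra_simps)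
  next
    case 3
    have ev: "\<forall>\<^sub>F h in at_right 0. T x \<le> T q + (x - q) * D h"
      unfolding eventually_at_right_field
    proof (intro exI[of _ "1"] conjI allI impI)
      fix h :: real assume h1: "0 < h"
      have conc: "(q + h - q) * T x + (q - x) * T (q+h) \<le> (q + h - x) * T q"
        unfolding T_def by (rule tau_concave) (use h1 3 x in auto)
      have "h * T x \<le> h * T q + (x-q) * (T (q+h) - T q)"
        using conc by (simp add: algebra_simps)
      also have "\<dots> = h * (T q + (x - q) * D h)" using E[of h] h1 by simp
      finally show "T x \<le> T q + (x - q) * D h" using h1 by simp
    qed simp
    have "T x \<le> T q + (x - q) * \<alpha>"
      by (rule tendsto_le[OF _ _ tendsto_const ev]) (use lim2 filterlim_at_split in auto)
    then show ?thesis by (simp add: T_def algebra_simps)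
  qed
qed

lemma legendre_le:
  assumes q: "q > 0" and d: "(tau_mu \<mu> has_real_derivative \<alpha>) (at q)"
  shows "legendre (tau_mu \<mu>) \<alpha> \<le> \<alpha> * q - tau_mu \<mu> q"
  unfolding legendre_def
proof (rule cINF_lower)
  show "bdd_below ((\<lambda>x. \<alpha> * x - tau_mu \<mu> x) ` {0<..})"
  proof (rule bdd_belowI2)
    fix x :: real assume "x \<in> {0<..}"
    then have "tau_mu \<mu> x \<le> tau_mu \<mu> q + \<alpha> * (x - q)" using tau_support[OF q d] by simp
    then show "\<alpha> * q - tau_mu \<mu> q \<le> \<alpha> * x - tau_mu \<mu> x" by (simp add: algebra_simps)
  qed
qed (use q in simp)

lemma deriv_right:
  assumes d: "(tau_mu \<mu> has_real_derivative \<alpha>) (at q)" and e: "\<epsilon> > 0"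
  shows "\<exists>h>0. tau_mu \<mu> (q + h) \<ge> tau_mu \<mu> q + h * (\<alpha> - \<epsilon>)"
proof -
  define T where "T = tau_mu \<mu>"
  define D where "D = (\<lambda>h. (T (q + h) - T q) / h)"
  have "(D \<longlongrightarrow> \<alpha>) (at 0)" using d unfolding DERIV_def D_def T_def by simp
  then have "(D \<longlongrightarrow> \<alpha>) (at_right 0)" using filterlim_at_split by auto
  from tendstoD[OF this e] obtain b where b: "b > 0" "\<And>h. 0 < h \<Longrightarrow> h < b \<Longrightarrow> dist (D h) \<alpha> < \<epsilon>"
    unfolding eventually_at_right_field by auto
  define h where "h = b / 2"
  have h: "h > 0" "h < b" using b by (auto simp: h_def)
  have "D h > \<alpha> - \<epsilon>" using b(2)[OF h] by (simp add: dist_real_def abs_less_iff)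
  then have "h * D h \<ge> h * (\<alpha> - \<epsilon>)" using h by simp
  moreover have "h * D h = T (q + h) - T q" using h by (simp add: D_def)
  ultimately show ?thesis using h unfolding T_def by (intro exI[of _ h]) auto
qed


definition W :: "nat \<Rightarrow> 'i list set" where "W k = {w. set w \<subseteq> Idx \<and> length w = k}"
definition Pw :: "'i list \<Rightarrow> real" where "Pw w = prod_list (map p w)"

lemma finite_W: "finite (W k)" unfolding W_def using Idx(1) by (rule finite_lists_length_eq)

lemma Pw_pos: "set w \<subseteq> Idx \<Longrightarrow> Pw w > 0"
  by (induction w) (auto simp: Pw_def p_pos)

lemma Pw_Cons: "Pw (i # w) = p i * Pw w" by (simp add: Pw_def)

lemma iter: assumes A: "A \<in> sets borel"
  shows "measure \<mu> A = (\<Sum>w\<in>W k. Pw w * measure \<mu> (Fw lam t w -` A))"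
proof (induction k)
  case 0
  have "W 0 = {[]}" by (auto simp: W_def)
  then show ?case by (simp add: Pw_def)
next
  case (Suc k)
  have step: "measure \<mu> (Fw lam t w -` A) = (\<Sum>i\<in>Idx. p i * measure \<mu> (Fw lam t (i#w) -` A))" for w
  proof -
    have "(\<lambda>x. lam * x + t i) -` (Fw lam t w -` A) = Fw lam t (i#w) -` A" for i by auto
    then show ?thesis using inv[OF Fw_vimage_borel[OF A, of lam t w]] by simp
  qed
  have "measure \<mu> A = (\<Sum>w\<in>W k. Pw w * measure \<mu> (Fw lam t w -` A))" by (rule Suc.IH)
  also have "\<dots> = (\<Sum>w\<in>W k. Pw w * (\<Sum>i\<in>Idx. p i * measure \<mu> (Fw lam t (i#w) -` A)))"
    by (rule sum.cong[OF refl]) (subst step, rule refl)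
  also have "\<dots> = (\<Sum>w\<in>W k. \<Sum>i\<in>Idx. Pw (i#w) * measure \<mu> (Fw lam t (i#w) -` A))"
    by (simp add: sum_distrib_left Pw_Cons algebra_simps)
  also have "\<dots> = (\<Sum>(w,i)\<in>W k \<times> Idx. Pw (i#w) * measure \<mu> (Fw lam t (i#w) -` A))"
    by (rule sum.cartesian_product)
  also have "\<dots> = (\<Sum>v\<in>(\<lambda>(w, i). i#w) ` (W k \<times> Idx). Pw v * measure \<mu> (Fw lam t v -` A))"
    by (subst sum.reindex) (auto simp: inj_on_def intro!: sum.cong)
  also have "(\<lambda>(w, i). i#w) ` (W k \<times> Idx) = W (Suc k)"
    unfolding W_def lists_length_Suc_eq by simp
  finally show ?case .
qed


lemma sum_le_S: assumes "finite K" shows "(\<Sum>k\<in>K. measure \<mu> (DI n k) powr q) \<le> S n q"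
proof -
  let ?R = "{0..<(2::int)^n}"
  have "(\<Sum>k\<in>K. measure \<mu> (DI n k) powr q) = (\<Sum>k\<in>K \<inter> ?R. measure \<mu> (DI n k) powr q)"
  proof (rule sum.mono_neutral_right[OF assms])
    show "\<forall>i\<in>K - K \<inter> ?R. measure \<mu> (DI n i) powr q = 0"
    proof
      fix i assume i: "i \<in> K - K \<inter> ?R"
      have "\<not> measure \<mu> (DI n i) > 0" using DI_pos_range[of n i] i by auto
      then have "measure \<mu> (DI n i) = 0" using measure_nonneg[of \<mu> "DI n i"] by linarith
      then show "measure \<mu> (DI n i) powr q = 0" by simp
    qed
  qed auto
  also have "\<dots> \<le> (\<Sum>k\<in>?R. measure \<mu> (DI n k) powr q)"
    by (rule sum_mono2) auto
  finally show ?thesis by (simp add: S_alt)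
qed

lemma msub: "measure \<mu> (A \<union> B) \<le> measure \<mu> A + measure \<mu> B" if "A \<in> sets borel" "B \<in> sets borel"
  by (rule measure_subadditive) (use that msets in auto)

lemma cover:
  assumes l: "ll > 0" "ll \<le> 1 / 2^n" "1 \<le> ll * 2^n * 2^r" and K: "finite K" and q: "q \<ge> 0"
  shows "(\<Sum>j\<in>K. measure \<mu> {u + real_of_int j * ll ..< u + (real_of_int j + 1) * ll} powr q)
      \<le> 2 powr q * (2 * 2^r) * S n q"
proof -
  define X where "X = (\<lambda>j::int. (u + real_of_int j * ll) * 2^n)"
  define \<kappa> where "\<kappa> = (\<lambda>j. \<lfloor>X j\<rfloor>)"
  define f where "f = (\<lambda>k. measure \<mu> (DI n k) powr q)"
  have contain: "{u + real_of_int j * ll ..< u + (real_of_int j + 1) * ll} \<subseteq> DI n (\<kappa> j) \<union> DI n (\<kappa> j + 1)" for j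
  proof
    fix x assume x: "x \<in> {u + real_of_int j * ll ..< u + (real_of_int j + 1) * ll}"
    have "X j \<le> x * 2^n" using x by (simp add: X_def)
    moreover have "x * 2^n < (u + (real_of_int j + 1) * ll) * 2^n" using x by simp
    moreover have "(u + (real_of_int j + 1) * ll) * 2^n = X j + ll * 2^n" by (simp add: X_def algebra_simps)
    moreover have "ll * 2^n \<le> 1" using l(2) by (simp add: field_simps)
    ultimately have a: "X j \<le> x * 2^n" and b: "x * 2^n < X j + 1" by linarith+
    have "\<kappa> j \<le> \<lfloor>x * 2^n\<rfloor>" unfolding \<kappa>_def using a by (rule floor_mono)
    moreover have "X j < real_of_int (\<kappa> j) + 1" unfolding \<kappa>_def by linarith
    then have "x * 2^n < real_of_int (\<kappa> j + 2)" using b by simp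
    then have "\<lfloor>x * 2^n\<rfloor> < \<kappa> j + 2" by (simp add: floor_less_iff)
    ultimately have "\<lfloor>x * 2^n\<rfloor> = \<kappa> j \<or> \<lfloor>x * 2^n\<rfloor> = \<kappa> j + 1" by linarith
    then show "x \<in> DI n (\<kappa> j) \<union> DI n (\<kappa> j + 1)" by (auto simp: DI_floor)
  qed
  have termb: "measure \<mu> {u + real_of_int j * ll ..< u + (real_of_int j + 1) * ll} powr q
      \<le> 2 powr q * (f (\<kappa> j) + f (\<kappa> j + 1))" for j
  proof -
    have "measure \<mu> {u + real_of_int j * ll ..< u + (real_of_int j + 1) * ll} \<le> measure \<mu> (DI n (\<kappa> j) \<union> DI n (\<kappa> j + 1))"
      by (rule P.finite_measure_mono[OF contain]) (auto intro: msets)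
    also have "\<dots> \<le> measure \<mu> (DI n (\<kappa> j)) + measure \<mu> (DI n (\<kappa> j + 1))" by (rule msub) auto
    finally have "measure \<mu> {u + real_of_int j * ll ..< u + (real_of_int j + 1) * ll} powr q
        \<le> (measure \<mu> (DI n (\<kappa> j)) + measure \<mu> (DI n (\<kappa> j + 1))) powr q"
      using q by (intro powr_mono2) auto
    also have "\<dots> \<le> 2 powr q * (f (\<kappa> j) + f (\<kappa> j + 1))" unfolding f_def by (rule powr_sum2) (use q in auto)
    finally show ?thesis .
  qed
  have fib: "j - i < 2^r" if "\<kappa> i = \<kappa> j" "i \<le> j" for i j
  proof -
    have "real_of_int (\<kappa> i) \<le> X i" "X j < real_of_int (\<kappa> j) + 1" unfolding \<kappa>_def by linarith+
    then have "X j - X i < 1" using that(1) by linarith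
    moreover have "X j - X i = real_of_int (j - i) * (ll * 2^n)" by (simp add: X_def algebra_simps)
    ultimately have lt: "real_of_int (j - i) * (ll * 2^n) < 1" by simp
    have nn: "0 \<le> real_of_int (j - i)" using that(2) by simp
    have "real_of_int (j - i) \<le> real_of_int (j - i) * (ll * 2^n * 2^r)"
      using mult_left_mono[OF l(3) nn] by simp
    also have "\<dots> = (real_of_int (j - i) * (ll * 2^n)) * 2^r" by (simp add: algebra_simps)
    also have "\<dots> < 1 * 2^r" using lt by (intro mult_strict_right_mono) auto
    finally have "real_of_int (j - i) < real_of_int (2^r)" by simp
    then show ?thesis by (simp only: of_int_less_iff)
  qed
  have card1: "card {j\<in>K. \<kappa> j = k} \<le> 2^r" for k
    using fiber_card[OF K, of \<kappa> "2^r" k] fib by (simp add: nat_power_eq)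
  have card2: "card {j\<in>K. \<kappa> j + 1 = k} \<le> 2^r" for k
    using fiber_card[OF K, of "\<lambda>j. \<kappa> j + 1" "2^r" k] fib by (simp add: nat_power_eq)
  have f0: "f k \<ge> 0" for k by (simp add: f_def)
  have "(\<Sum>j\<in>K. measure \<mu> {u + real_of_int j * ll ..< u + (real_of_int j + 1) * ll} powr q)
      \<le> (\<Sum>j\<in>K. 2 powr q * (f (\<kappa> j) + f (\<kappa> j + 1)))" by (rule sum_mono) (rule termb)
  also have "\<dots> = 2 powr q * ((\<Sum>j\<in>K. f (\<kappa> j)) + (\<Sum>j\<in>K. f ((\<lambda>j. \<kappa> j + 1) j)))"
    by (simp add: distrib_left sum.distrib sum_distrib_left)
  also have "\<dots> \<le> 2 powr q * (real (2^r) * (\<Sum>k\<in>\<kappa> ` K. f k) + real (2^r) * (\<Sum>k\<in>(\<lambda>j. \<kappa> j + 1) ` K. f k))"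
    by (intro mult_left_mono add_mono fiber_sum[OF K f0] card1 card2) auto
  also have "\<dots> \<le> 2 powr q * (2^r * S n q + 2^r * S n q)"
  proof -
    have "(\<Sum>k\<in>\<kappa> ` K. f k) \<le> S n q" unfolding f_def by (rule sum_le_S) (use K in simp)
    moreover have "(\<Sum>k\<in>(\<lambda>j. \<kappa> j + 1) ` K. f k) \<le> S n q" unfolding f_def by (rule sum_le_S) (use K in simp)
    ultimately show ?thesis by (intro mult_left_mono add_mono) auto
  qed
  also have "\<dots> = 2 powr q * (2 * 2^r) * S n q" by (simp add: algebra_simps)
  finally show ?thesis .
qed


lemma S_bound_ev: assumes q: "q > 0" and d: "\<delta> > 0"
  shows "\<exists>N. \<forall>n\<ge>N. S n q \<le> 2 powr (- (tau_mu \<mu> q - \<delta>) * real n)"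
proof -
  obtain N0 where N0: "\<And>n. n \<ge> N0 \<Longrightarrow> g n q > tau_mu \<mu> q - \<delta>"
    using tau_ev[OF q d] unfolding eventually_sequentially by blast
  show ?thesis
  proof (intro exI[of _ "max N0 1"] allI impI)
    fix n assume n: "max N0 1 \<le> n"
    then have gn: "g n q > tau_mu \<mu> q - \<delta>" and npos: "real n > 0" using N0 by auto
    have Sp: "S n q > 0" using S_pos q by simp
    have "(tau_mu \<mu> q - \<delta>) * real n < g n q * real n" using gn npos by (simp add: mult_strict_right_mono)
    moreover have "g n q * real n = - log 2 (S n q)" using npos by (simp add: g_def)
    ultimately have "- log 2 (S n q) > (tau_mu \<mu> q - \<delta>) * real n" by simp
    then have "log 2 (S n q) < - ((tau_mu \<mu> q - \<delta>) * real n)" by linarith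
    then have "log 2 (S n q) < - (tau_mu \<mu> q - \<delta>) * real n" by (simp only: mult_minus_left)
    then have "2 powr (log 2 (S n q)) < 2 powr (- (tau_mu \<mu> q - \<delta>) * real n)" by simp
    then show "S n q \<le> 2 powr (- (tau_mu \<mu> q - \<delta>) * real n)" using Sp by simp
  qed
qed

lemma choose_k: "\<exists>k. k > 0 \<and> lam ^ k \<le> 1 / 2^(s+1) \<and> lam / 2^(s+1) < lam ^ k"
proof -
  let ?P = "\<lambda>k. lam ^ k \<le> 1 / (2::real)^(s+1)"
  obtain k0 where "lam ^ k0 < 1 / (2::real)^(s+1)" using real_arch_pow_inv[of "1 / (2::real)^(s+1)" lam] lam by auto
  then have ex: "\<exists>k. ?P k" by (intro exI[of _ k0]) simp
  define k where "k = (LEAST k. ?P k)"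
  have Pk: "?P k" unfolding k_def by (rule LeastI_ex[OF ex])
  have k0: "k \<noteq> 0"
  proof
    assume "k = 0"
    then have "1 \<le> 1 / (2::real)^(s+1)" using Pk by simp
    moreover have "(1::real) < 2^(s+1)" by (rule one_less_power) auto
    then have "1 / (2::real)^(s+1) < 1" by (simp add: divide_less_eq)
    ultimately show False by simp
  qed
  have "\<not> ?P (k - 1)" unfolding k_def by (rule not_less_Least) (use k0 in \<open>simp add: k_def\<close>)
  then have "lam ^ (k - 1) > 1 / 2^(s+1)" by simp
  moreover have "lam ^ k = lam * lam ^ (k - 1)" using k0 by (cases k) auto
  ultimately have "lam ^ k > lam * (1 / 2^(s+1))" using mult_strict_left_mono[of "1 / 2^(s+1)" "lam ^ (k - 1)" lam] lam by simp
  then show ?thesis using k0 Pk by (intro exI[of _ k]) auto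
qed

lemma double_DI: "double_int (DI s j0) = {real_of_int j0 / 2^s - 1 / 2^(s+1) ..< (real_of_int j0 + 1) / 2^s + 1 / 2^(s+1)}"
proof -
  have lt: "real_of_int j0 / 2^s < (real_of_int j0 + 1) / 2^s" by (simp add: divide_strict_right_mono)
  have "Inf (DI s j0) = real_of_int j0 / 2^s" "Sup (DI s j0) = (real_of_int j0 + 1) / 2^s"
    unfolding DI_def using lt by simp_all
  moreover have "((real_of_int j0 + 1) / 2^s - real_of_int j0 / 2^s) / 2 = 1 / 2^(s+1)"
    by (simp add: field_simps)
  ultimately show ?thesis unfolding double_int_def by (simp add: mult.commute)
qed

lemma vimage_DI:
  assumes "length w = k"
  shows "Fw lam t w -` DI N j = {(- Fw lam t w 0 / lam^k) + real_of_int j * (1 / (2^N * lam^k)) ..<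
                                 (- Fw lam t w 0 / lam^k) + (real_of_int j + 1) * (1 / (2^N * lam^k))}"
proof -
  define L where "L = lam ^ k"
  define c where "c = Fw lam t w 0"
  define A where "A = - c / L + real_of_int j * (1 / (2^N * L))"
  define B where "B = - c / L + (real_of_int j + 1) * (1 / (2^N * L))"
  have L: "L > 0" using lam by (simp add: L_def)
  have F: "Fw lam t w x = L * x + c" for x unfolding L_def c_def using assms Fw_affine[of lam t w x] by simp
  have eA: "L * A + c = real_of_int j / 2^N" using L by (simp add: A_def field_simps)
  have eB: "L * B + c = (real_of_int j + 1) / 2^N" using L by (simp add: B_def field_simps)
  have "x \<in> Fw lam t w -` DI N j \<longleftrightarrow> x \<in> {A..<B}" for x
  proof -
    have "x \<in> Fw lam t w -` DI N j \<longleftrightarrow> L * A + c \<le> L * x + c \<and> L * x + c < L * B + c"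
      unfolding eA eB by (simp add: F DI_def)
    also have "\<dots> \<longleftrightarrow> A \<le> x \<and> x < B" using L by simp
    finally show ?thesis by simp
  qed
  then show ?thesis unfolding A_def B_def L_def c_def by blast
qed

lemma meas_R:
  assumes J: "J \<in> sets borel" "J \<subseteq> I"
  shows "measure \<mu> J = (\<Sum>w\<in>{w\<in>W k. Fw lam t w ` {0..<1} \<inter> I \<noteq> {}}. Pw w * measure \<mu> (Fw lam t w -` J))"
proof -
  have "measure \<mu> J = (\<Sum>w\<in>W k. Pw w * measure \<mu> (Fw lam t w -` J))" by (rule iter[OF J(1)])
  also have "\<dots> = (\<Sum>w\<in>{w\<in>W k. Fw lam t w ` {0..<1} \<inter> I \<noteq> {}}. Pw w * measure \<mu> (Fw lam t w -` J))"
  proof (rule sum.mono_neutral_right[OF finite_W])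
    show "\<forall>w\<in>W k - {w\<in>W k. Fw lam t w ` {0..<1} \<inter> I \<noteq> {}}. Pw w * measure \<mu> (Fw lam t w -` J) = 0"
    proof
      fix w assume w: "w \<in> W k - {w\<in>W k. Fw lam t w ` {0..<1} \<inter> I \<noteq> {}}"
      have "Fw lam t w -` J \<inter> {0..<1} = {}" using w J(2) by auto
      then have "measure \<mu> (Fw lam t w -` J) = 0" by (intro null_outside Fw_vimage_borel J(1))
      then show "Pw w * measure \<mu> (Fw lam t w -` J) = 0" by simp
    qed
  qed auto
  finally show ?thesis .
qed

lemma T_le:
  assumes k: "lam ^ k \<le> 1 / 2^(s+1)"
  shows "(\<Sum>w\<in>{w\<in>W k. Fw lam t w ` {0..<1} \<inter> DI s j0 \<noteq> {}}. Pw w) \<le> measure \<mu> (double_int (DI s j0))"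
proof -
  let ?R = "{w\<in>W k. Fw lam t w ` {0..<1} \<inter> DI s j0 \<noteq> {}}"
  define a where "a = real_of_int j0 / 2^s"
  define h where "h = 1 / (2::real)^s"
  have hh: "1 / (2::real)^(s+1) = h / 2" by (simp add: h_def)
  have DIe: "DI s j0 = {a..<a+h}" unfolding DI_def a_def h_def by (simp add: add_divide_distrib)
  have dbl: "double_int (DI s j0) = {a - h/2 ..< a + h + h/2}"
    unfolding double_DI hh a_def h_def by (simp add: add_divide_distrib)
  have borel2: "double_int (DI s j0) \<in> sets borel" unfolding dbl by simp
  define L where "L = lam ^ k"
  have L0: "L > 0" using lam by (simp add: L_def)
  have L1: "L \<le> h/2" unfolding L_def hh[symmetric] by (rule k)
  have sub: "{0..<1} \<subseteq> Fw lam t w -` double_int (DI s j0)" if w: "w \<in> ?R" for w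
  proof
    fix x :: real assume x: "x \<in> {0..<1}"
    from w have "Fw lam t w ` {0..<1} \<inter> DI s j0 \<noteq> {}" by simp
    then obtain y where "y \<in> Fw lam t w ` {0..<1} \<inter> DI s j0" by (meson ex_in_conv)
    then have y: "y \<in> Fw lam t w ` {0..<1}" "y \<in> DI s j0" by (rule IntD1, rule IntD2)
    from y(1) obtain x0 where x0': "x0 \<in> {0..<1}" "y = Fw lam t w x0" by (rule imageE)
    have x0: "x0 \<in> {0..<1}" "Fw lam t w x0 \<in> DI s j0" using x0' y(2) by simp_all
    have len: "length w = k" using w by (simp add: W_def)
    have Fx: "Fw lam t w x = L * x + Fw lam t w 0" "Fw lam t w x0 = L * x0 + Fw lam t w 0"
      unfolding L_def using Fw_affine[of lam t w x] Fw_affine[of lam t w x0] len by simp_all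
    have diff: "Fw lam t w x - Fw lam t w x0 = L * (x - x0)" unfolding Fx by (simp add: algebra_simps)
    have "0 \<le> x" "x < 1" "0 \<le> x0" "x0 < 1" using x x0(1) by simp_all
    then have x1: "x - x0 < 1" "x0 - x < 1" by linarith+
    have "L * (x - x0) < L * 1" using x1 L0 by (intro mult_strict_left_mono) auto
    then have d1: "Fw lam t w x - Fw lam t w x0 < h/2" using diff L1 by linarith
    have "L * (x0 - x) < L * 1" using x1 L0 by (intro mult_strict_left_mono) auto
    moreover have "L * (x0 - x) = - (L * (x - x0))" by (simp add: algebra_simps)
    ultimately have d2: "Fw lam t w x0 - Fw lam t w x < h/2" using diff L1 by linarith
    have "a \<le> Fw lam t w x0" "Fw lam t w x0 < a + h" using x0(2) unfolding DIe by auto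
    then have "a - h/2 \<le> Fw lam t w x" "Fw lam t w x < a + h + h/2" using d1 d2 by linarith+
    then show "x \<in> Fw lam t w -` double_int (DI s j0)" unfolding dbl by simp
  qed
  have "(\<Sum>w\<in>?R. Pw w) = (\<Sum>w\<in>?R. Pw w * measure \<mu> (Fw lam t w -` double_int (DI s j0)))"
  proof (rule sum.cong[OF refl])
    fix w assume w: "w \<in> ?R"
    have "measure \<mu> {0..<1} \<le> measure \<mu> (Fw lam t w -` double_int (DI s j0))"
      by (rule P.finite_measure_mono[OF sub[OF w] msets[OF Fw_vimage_borel[OF borel2]]])
    then have "1 \<le> measure \<mu> (Fw lam t w -` double_int (DI s j0))" using supp by simp
    then have "measure \<mu> (Fw lam t w -` double_int (DI s j0)) = 1" using mle1 by (intro antisym) auto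
    then show "Pw w = Pw w * measure \<mu> (Fw lam t w -` double_int (DI s j0))" by simp
  qed
  also have "\<dots> \<le> (\<Sum>w\<in>W k. Pw w * measure \<mu> (Fw lam t w -` double_int (DI s j0)))"
  proof (rule sum_mono2[OF finite_W])
    show "?R \<subseteq> W k" by blast
    fix w assume "w \<in> W k - ?R"
    then have "Pw w > 0" using Pw_pos by (simp add: W_def)
    then show "0 \<le> Pw w * measure \<mu> (Fw lam t w -` double_int (DI s j0))" by simp
  qed
  also have "\<dots> = measure \<mu> (double_int (DI s j0))" by (rule iter[OF borel2, symmetric])
  finally show ?thesis .
qed

lemma K_finite: "finite {j. DI (s+m) j \<subseteq> DI s j0}"
proof (rule finite_subset)
  show "{j. DI (s+m) j \<subseteq> DI s j0} \<subseteq> {j0 * 2^m .. (j0+1) * 2^m}"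
  proof
    fix j assume "j \<in> {j. DI (s+m) j \<subseteq> DI s j0}"
    then have sub: "DI (s+m) j \<subseteq> DI s j0" by simp
    have "real_of_int j / 2^(s+m) \<in> DI s j0" by (rule subsetD[OF sub DI_left])
    then have ab: "real_of_int j0 \<le> real_of_int j / 2^(s+m) * 2^s \<and> real_of_int j / 2^(s+m) * 2^s < real_of_int j0 + 1"
      by (simp only: DI_mem)
    have e: "real_of_int j / 2^(s+m) * 2^s = real_of_int j / 2^m" by (simp add: power_add)
    have a: "real_of_int j0 \<le> real_of_int j / 2^m" and b: "real_of_int j / 2^m < real_of_int j0 + 1"
      using ab unfolding e by auto
    have pm: "(0::real) < 2^m" by simp
    have "real_of_int j0 * 2^m \<le> real_of_int j" using a pm by (simp only: pos_le_divide_eq)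
    then have "real_of_int (j0 * 2^m) \<le> real_of_int j" by simp
    moreover have "real_of_int j < (real_of_int j0 + 1) * 2^m" using b pm by (simp only: pos_divide_less_eq)
    then have "real_of_int j \<le> real_of_int ((j0+1) * 2^m)" by simp
    ultimately show "j \<in> {j0 * 2^m .. (j0+1) * 2^m}" by (simp only: of_int_le_iff atLeastAtMost_iff)
  qed
qed simp


lemma part_ii:
  assumes q: "q > 1" and d: "\<delta> > 0"
  shows "\<forall>\<^sub>F m in sequentially. \<forall>s::nat. \<forall>I\<in>dyadic s.
     (\<Sum>J\<in>{J\<in>dyadic (s + m). J \<subseteq> I}. measure \<mu> J powr q)
       \<le> 2 powr (- (tau_mu \<mu> q - \<delta>) * real m) * measure \<mu> (double_int I) powr q"
proof -
  define \<tau> where "\<tau> = tau_mu \<mu> q"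
  define d2 where "d2 = \<delta> / 2"
  have d2: "d2 > 0" using d by (simp add: d2_def)
  obtain c :: nat where c: "1 / lam < 2^c" using real_arch_pow[of 2 "1/lam"] by auto
  have lamc: "1 / 2^c < lam" using c lam by (simp add: field_simps)
  obtain N0 where N0: "\<And>n. n \<ge> N0 \<Longrightarrow> S n q \<le> 2 powr (- (\<tau> - d2) * real n)"
    using S_bound_ev[of q d2] q d2 unfolding \<tau>_def by auto
  define Cst where "Cst = 2 powr q * (2 * 2^c)"
  define C0 where "C0 = Cst * 2 powr (\<bar>\<tau> - d2\<bar> * (real c + 1))"
  have Cst: "Cst > 0" by (simp add: Cst_def)
  have C0: "C0 > 0" by (simp add: C0_def Cst)
  obtain M1 :: nat where M1': "log 2 C0 / d2 < real M1" using reals_Archimedean2 by blast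
  then have M1: "log 2 C0 / d2 \<le> real M1" by simp
  show ?thesis unfolding eventually_sequentially
  proof (intro exI[of _ "max M1 (N0 + c + 2)"] allI impI ballI)
    fix m s I assume m: "max M1 (N0 + c + 2) \<le> m" and I: "I \<in> dyadic s"
    from I obtain j0 where I: "I = DI s j0" by (auto simp: dyadic_eq)
    obtain k where k: "k > 0" "lam^k \<le> 1/2^(s+1)" "lam/2^(s+1) < lam^k" using choose_k by blast
    define n where "n = m - 1 - c"
    have mn: "m = n + 1 + c" and nN0: "n \<ge> N0" and mM1: "M1 \<le> m" using m by (auto simp: n_def)
    have lk: "lam^k > 0" using lam by simp
    define X where "X = (2::real)^(s+m) * lam^k"
    define ll where "ll = 1 / X"
    have pw: "(2::real)^(s+m) = 2^(s+1) * (2^n * 2^c)" by (simp add: mn power_add mult_ac)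
    have X0: "X > 0" using lk by (simp add: X_def)
    have "X \<ge> 2^(s+m) * (lam / 2^(s+1))" unfolding X_def using k(3) by (intro mult_left_mono) auto
    also have "2^(s+m) * (lam / 2^(s+1)) = 2^n * 2^c * lam" unfolding pw by simp
    also have "2^n * 2^c * lam \<ge> 2^n * 2^c * (1/2^c)" using lamc by (intro mult_left_mono) auto
    finally have Xlow: "X \<ge> 2^n" by simp
    have "X \<le> 2^(s+m) * (1/2^(s+1))" unfolding X_def using k(2) by (intro mult_left_mono) auto
    also have "\<dots> = 2^n * 2^c" unfolding pw by simp
    finally have Xup: "X \<le> 2^n * 2^c" .
    have ll0: "ll > 0" using X0 by (simp add: ll_def)
    have ll1: "ll \<le> 1 / 2^n" unfolding ll_def using Xlow X0 by (intro divide_left_mono) auto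
    have ll2: "1 \<le> ll * 2^n * 2^c" unfolding ll_def using Xup X0 by (simp add: le_divide_eq)
    define R where "R = {w\<in>W k. Fw lam t w ` {0..<1} \<inter> I \<noteq> {}}"
    define T where "T = (\<Sum>w\<in>R. Pw w)"
    define K where "K = {j. DI (s+m) j \<subseteq> I}"
    have finK: "finite K" unfolding K_def I by (rule K_finite)
    have finR: "finite R" unfolding R_def using finite_W by simp
    have Ppos: "w \<in> R \<Longrightarrow> Pw w > 0" for w using Pw_pos by (simp add: R_def W_def)
    have T0: "T \<ge> 0" unfolding T_def using Ppos by (intro sum_nonneg) (simp add: less_imp_le)
    have setJ: "{J\<in>dyadic (s+m). J \<subseteq> I} = DI (s+m) ` K" by (auto simp: dyadic_eq K_def)
    define y where "y = (\<lambda>w j. measure \<mu> (Fw lam t w -` DI (s+m) j))"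
    have mJ: "measure \<mu> (DI (s+m) j) = (\<Sum>w\<in>R. Pw w * y w j)" if "j \<in> K" for j
      using meas_R[of "DI (s+m) j" I k] that by (simp add: K_def R_def y_def)
    have cov: "(\<Sum>j\<in>K. y w j powr q) \<le> Cst * S n q" if w: "w \<in> R" for w
    proof -
      have len: "length w = k" using w by (simp add: R_def W_def)
      have "(\<Sum>j\<in>K. y w j powr q) = (\<Sum>j\<in>K. measure \<mu> {(- Fw lam t w 0 / lam^k) + real_of_int j * ll ..<
                                 (- Fw lam t w 0 / lam^k) + (real_of_int j + 1) * ll} powr q)"
        unfolding y_def ll_def X_def vimage_DI[OF len] ..
      also have "\<dots> \<le> 2 powr q * (2 * 2^c) * S n q"
        by (rule cover[OF ll0 ll1 ll2 finK]) (use q in simp)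
      finally show ?thesis by (simp add: Cst_def)
    qed
    have "(\<Sum>J\<in>{J\<in>dyadic (s + m). J \<subseteq> I}. measure \<mu> J powr q) = (\<Sum>j\<in>K. measure \<mu> (DI (s+m) j) powr q)"
      unfolding setJ by (subst sum.reindex) (auto intro: inj_on_subset[OF DI_inj])
    also have "\<dots> = (\<Sum>j\<in>K. (\<Sum>w\<in>R. Pw w * y w j) powr q)" by (rule sum.cong[OF refl]) (simp add: mJ)
    also have "\<dots> \<le> (\<Sum>j\<in>K. T powr (q - 1) * (\<Sum>w\<in>R. Pw w * y w j powr q))"
      unfolding T_def using q Ppos by (intro sum_mono jensen_powr[OF finR]) (auto simp: y_def less_imp_le)
    also have "\<dots> = T powr (q - 1) * (\<Sum>w\<in>R. Pw w * (\<Sum>j\<in>K. y w j powr q))"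
      by (simp add: sum_distrib_left sum.swap[of _ K R])
    also have "\<dots> \<le> T powr (q - 1) * (\<Sum>w\<in>R. Pw w * (Cst * S n q))"
      using cov Ppos by (intro mult_left_mono sum_mono) (auto simp: less_imp_le)
    also have "\<dots> = (T powr (q - 1) * T) * (Cst * S n q)"
      by (simp add: T_def sum_distrib_right)
    also have "T powr (q - 1) * T = T powr q"
    proof (cases "T = 0")
      case False
      then have "T > 0" using T0 by simp
      have "T powr (q - 1) * T powr 1 = T powr (q - 1 + 1)" by (rule powr_add[symmetric])
      then show ?thesis using \<open>T > 0\<close> by simp
    qed simp
    finally have chain1: "(\<Sum>J\<in>{J\<in>dyadic (s + m). J \<subseteq> I}. measure \<mu> J powr q) \<le> T powr q * (Cst * S n q)" .
    have Tq: "T powr q \<le> measure \<mu> (double_int I) powr q"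
      unfolding I using T_le[OF k(2), of j0] T0 q by (intro powr_mono2) (auto simp: T_def R_def I)
    define E where "E = 2 powr (- (\<tau> - d2) * real m)"
    define B where "B = 2 powr (\<bar>\<tau> - d2\<bar> * (real c + 1))"
    have SE: "S n q \<le> E * B"
    proof -
      have "S n q \<le> 2 powr (- (\<tau> - d2) * real n)" by (rule N0[OF nN0])
      also have "- (\<tau> - d2) * real n = - (\<tau> - d2) * real m + (\<tau> - d2) * (real c + 1)"
        by (simp add: mn algebra_simps)
      also have "\<dots> \<le> - (\<tau> - d2) * real m + \<bar>\<tau> - d2\<bar> * (real c + 1)"
        by (intro add_left_mono mult_right_mono) auto
      finally have "S n q \<le> 2 powr (- (\<tau> - d2) * real m + \<bar>\<tau> - d2\<bar> * (real c + 1))" by simp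
      then show ?thesis by (simp add: E_def B_def powr_add)
    qed
    have Sn0: "0 \<le> S n q" using S_pos[of q n] q by simp
    have C0le: "C0 \<le> 2 powr (d2 * real m)"
    proof -
      have "log 2 C0 \<le> d2 * real M1" using M1 d2 by (simp add: divide_le_eq mult.commute)
      also have "\<dots> \<le> d2 * real m" using mM1 d2 by (intro mult_left_mono) auto
      finally have "2 powr (log 2 C0) \<le> 2 powr (d2 * real m)" by simp
      then show "C0 \<le> 2 powr (d2 * real m)" using C0 by simp
    qed
    have m2: "0 \<le> measure \<mu> (double_int I) powr q" by simp
    have E0: "0 \<le> E" by (simp add: E_def)
    note chain1
    also have "T powr q * (Cst * S n q) \<le> measure \<mu> (double_int I) powr q * (Cst * S n q)"
      using Tq Cst Sn0 by (intro mult_right_mono) auto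
    also have "\<dots> \<le> measure \<mu> (double_int I) powr q * (Cst * (E * B))"
      using SE Cst m2 by (intro mult_left_mono) auto
    also have "\<dots> = measure \<mu> (double_int I) powr q * (C0 * E)"
      by (simp add: C0_def B_def)
    also have "\<dots> \<le> measure \<mu> (double_int I) powr q * (2 powr (d2 * real m) * E)"
      using C0le E0 m2 by (intro mult_left_mono mult_right_mono) auto
    also have "2 powr (d2 * real m) * E = 2 powr (- (tau_mu \<mu> q - \<delta>) * real m)"
      unfolding E_def by (simp add: powr_add[symmetric] d2_def \<tau>_def algebra_simps)
    finally show "(\<Sum>J\<in>{J\<in>dyadic (s + m). J \<subseteq> I}. measure \<mu> J powr q)
       \<le> 2 powr (- (tau_mu \<mu> q - \<delta>) * real m) * measure \<mu> (double_int I) powr q"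
      by (simp only: mult.commute)
  qed
qed


lemma Jset_finite: "finite {J\<in>dyadic (s+m). J \<subseteq> DI s j0}"
proof -
  have "{J\<in>dyadic (s+m). J \<subseteq> DI s j0} = DI (s+m) ` {j. DI (s+m) j \<subseteq> DI s j0}"
    by (auto simp: dyadic_eq)
  then show ?thesis using K_finite by simp
qed

lemma I_sub_double: "DI s j0 \<subseteq> double_int (DI s j0)"
proof -
  have e: "(0::real) < 1 / 2^(s+1)" by simp
  have "DI s j0 \<subseteq> {real_of_int j0 / 2^s - 1 / 2^(s+1) ..< (real_of_int j0 + 1) / 2^s + 1 / 2^(s+1)}"
    unfolding DI_def using e by auto
  then show ?thesis by (simp only: double_DI)
qed

lemma part_i:
  assumes q: "q > 1" and d: "(tau_mu \<mu> has_real_derivative \<alpha>) (at q)" and ka: "\<kappa> > 0"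
  shows "\<exists>\<eta>>0. \<forall>\<^sub>F m in sequentially. \<forall>s::nat. \<forall>I\<in>dyadic s. \<forall>D'.
        D' \<subseteq> {J\<in>dyadic (s + m). J \<subseteq> I} \<and>
        real (card D') \<le> 2 powr ((legendre (tau_mu \<mu>) \<alpha> - \<kappa>) * real m) \<longrightarrow>
        (\<Sum>J\<in>D'. measure \<mu> J powr q)
          \<le> 2 powr (- (tau_mu \<mu> q + \<eta>) * real m) * measure \<mu> (double_int I) powr q"
proof -
  define \<tau> where "\<tau> = tau_mu \<mu> q"
  define \<epsilon> where "\<epsilon> = \<kappa> / (2 * q)"
  have e: "\<epsilon> > 0" using ka q by (simp add: \<epsilon>_def)
  have eq: "\<epsilon> * q = \<kappa> / 2" using q by (simp add: \<epsilon>_def)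
  obtain h where h: "h > 0" "tau_mu \<mu> (q + h) \<ge> \<tau> + h * (\<alpha> - \<epsilon>/4)"
    using deriv_right[OF d, of "\<epsilon>/4"] e unfolding \<tau>_def by auto
  define \<delta> where "\<delta> = \<epsilon> * h / 4"
  have dl: "\<delta> > 0" using e h by (simp add: \<delta>_def)
  have ev2: "\<forall>\<^sub>F m in sequentially. \<forall>s::nat. \<forall>I\<in>dyadic s.
     (\<Sum>J\<in>{J\<in>dyadic (s + m). J \<subseteq> I}. measure \<mu> J powr (q + h))
       \<le> 2 powr (- (tau_mu \<mu> (q + h) - \<delta>) * real m) * measure \<mu> (double_int I) powr (q + h)"
    by (rule part_ii) (use q h dl in auto)
  define \<eta>0 where "\<eta>0 = min (\<epsilon> * h / 2) (\<kappa> / 2)"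
  have \<eta>0: "\<eta>0 > 0" using e h ka by (simp add: \<eta>0_def)
  obtain M2 :: nat where M2: "2 / \<eta>0 < real M2" using reals_Archimedean2 by blast
  have leg: "legendre (tau_mu \<mu>) \<alpha> \<le> \<alpha> * q - \<tau>" unfolding \<tau>_def by (rule legendre_le) (use q d in auto)
  show ?thesis
  proof (intro exI[of _ "\<eta>0 / 2"] conjI)
    show "\<eta>0 / 2 > 0" using \<eta>0 by simp
    show "\<forall>\<^sub>F m in sequentially. \<forall>s::nat. \<forall>I\<in>dyadic s. \<forall>D'.
        D' \<subseteq> {J\<in>dyadic (s + m). J \<subseteq> I} \<and>
        real (card D') \<le> 2 powr ((legendre (tau_mu \<mu>) \<alpha> - \<kappa>) * real m) \<longrightarrow>
        (\<Sum>J\<in>D'. measure \<mu> J powr q)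
          \<le> 2 powr (- (tau_mu \<mu> q + \<eta>0 / 2) * real m) * measure \<mu> (double_int I) powr q"
      using ev2 eventually_ge_at_top[of M2]
    proof eventually_elim
      case (elim m)
      note ii = elim(1)
      have mM2: "real M2 \<le> real m" using elim(2) by simp
      show ?case
      proof (intro allI ballI impI, elim conjE)
        fix s I D' assume I: "I \<in> dyadic s" and D'sub: "D' \<subseteq> {J\<in>dyadic (s + m). J \<subseteq> I}"
          and card: "real (card D') \<le> 2 powr ((legendre (tau_mu \<mu>) \<alpha> - \<kappa>) * real m)"
        from I obtain j0 where Ij: "I = DI s j0" by (auto simp: dyadic_eq)
        have finJ: "finite {J\<in>dyadic (s + m). J \<subseteq> I}" unfolding Ij by (rule Jset_finite)
        have finD: "finite D'" using finite_subset[OF D'sub finJ] .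
        define M where "M = measure \<mu> (double_int I)"
        have Jle: "measure \<mu> J \<le> M" if "J \<in> D'" for J
        proof -
          have "J \<subseteq> double_int I" using that D'sub I_sub_double[of s j0] unfolding Ij by blast
          moreover have "double_int I \<in> sets borel" unfolding Ij double_DI by simp
          ultimately show ?thesis unfolding M_def by (intro P.finite_measure_mono msets)
        qed
        define RHS where "RHS = 2 powr (- (\<tau> + \<eta>0 / 2) * real m) * M powr q"
        show "(\<Sum>J\<in>D'. measure \<mu> J powr q) \<le> 2 powr (- (tau_mu \<mu> q + \<eta>0 / 2) * real m) * measure \<mu> (double_int I) powr q"
        proof (cases "M = 0")
          case True
          then have "\<forall>J\<in>D'. measure \<mu> J = 0" using Jle measure_nonneg[of \<mu>] by (meson antisym)
          then have "(\<Sum>J\<in>D'. measure \<mu> J powr q) = 0" by simp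
          then show ?thesis by simp
        next
          case False
          then have M0: "M > 0" using measure_nonneg[of \<mu> "double_int I"] unfolding M_def by linarith
          define \<beta> where "\<beta> = 2 powr (- (\<alpha> - \<epsilon>) * real m) * M"
          have \<beta>0: "\<beta> > 0" using M0 by (simp add: \<beta>_def)
          define D1 where "D1 = {J\<in>D'. \<beta> \<le> measure \<mu> J}"
          define D2 where "D2 = {J\<in>D'. \<not> \<beta> \<le> measure \<mu> J}"
          have DU: "D' = D1 \<union> D2" and DI0: "D1 \<inter> D2 = {}" by (auto simp: D1_def D2_def)
          have fin1: "finite D1" and fin2: "finite D2" using finD by (auto simp: D1_def D2_def)
          have split: "(\<Sum>J\<in>D'. measure \<mu> J powr q) = (\<Sum>J\<in>D1. measure \<mu> J powr q) + (\<Sum>J\<in>D2. measure \<mu> J powr q)"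
            unfolding DU by (rule sum.union_disjoint[OF fin1 fin2 DI0])
          have Mq: "M powr (- h) * M powr (q + h) = M powr q" using M0 by (simp add: powr_add[symmetric])
          have bh: "\<beta> powr (- h) = 2 powr ((\<alpha> - \<epsilon>) * real m * h) * M powr (- h)"
            unfolding \<beta>_def using M0 by (simp add: powr_mult powr_powr) (simp add: algebra_simps)
          have bq: "\<beta> powr q = 2 powr (- (\<alpha> - \<epsilon>) * real m * q) * M powr q"
            unfolding \<beta>_def using M0 by (simp add: powr_mult powr_powr)
          have l1: "measure \<mu> J powr q \<le> \<beta> powr (- h) * measure \<mu> J powr (q + h)" if J: "J \<in> D1" for J
          proof -
            have bJ: "\<beta> \<le> measure \<mu> J" using J by (simp add: D1_def)
            then have mJ: "measure \<mu> J > 0" using \<beta>0 by simp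
            have "measure \<mu> J powr q = measure \<mu> J powr (q + h) * measure \<mu> J powr (- h)"
              using mJ by (simp add: powr_add[symmetric])
            also have "\<dots> \<le> measure \<mu> J powr (q + h) * \<beta> powr (- h)"
              using powr_mono2'[of "- h" \<beta> "measure \<mu> J"] h \<beta>0 bJ by (intro mult_left_mono) auto
            finally show ?thesis by (simp add: mult.commute)
          qed
          have D1sub: "D1 \<subseteq> {J\<in>dyadic (s + m). J \<subseteq> I}" using D'sub by (auto simp: D1_def)
          have "(\<Sum>J\<in>D1. measure \<mu> J powr q) \<le> (\<Sum>J\<in>D1. \<beta> powr (- h) * measure \<mu> J powr (q + h))"
            by (rule sum_mono) (rule l1)
          also have "\<dots> = \<beta> powr (- h) * (\<Sum>J\<in>D1. measure \<mu> J powr (q + h))" by (simp add: sum_distrib_left)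
          also have "\<dots> \<le> \<beta> powr (- h) * (\<Sum>J\<in>{J\<in>dyadic (s + m). J \<subseteq> I}. measure \<mu> J powr (q + h))"
            by (intro mult_left_mono sum_mono2[OF finJ D1sub]) auto
          also have "\<dots> \<le> \<beta> powr (- h) * (2 powr (- (tau_mu \<mu> (q + h) - \<delta>) * real m) * M powr (q + h))"
            using ii I unfolding M_def by (intro mult_left_mono) auto
          also have "\<dots> = 2 powr ((\<alpha> - \<epsilon>) * real m * h) * 2 powr (- (tau_mu \<mu> (q + h) - \<delta>) * real m) * (M powr (- h) * M powr (q + h))"
            unfolding bh by (simp add: mult_ac)
          also have "\<dots> = 2 powr ((\<alpha> - \<epsilon>) * real m * h + - (tau_mu \<mu> (q + h) - \<delta>) * real m) * M powr q"
            unfolding Mq by (simp add: powr_add)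
          also have "\<dots> \<le> 2 powr (- (\<tau> + \<eta>0) * real m) * M powr q"
          proof -
            have "(\<alpha> - \<epsilon>) * h - tau_mu \<mu> (q + h) + \<delta> \<le> - (\<tau> + \<epsilon> * h / 2)"
              using h(2) by (simp add: \<delta>_def algebra_simps)
            also have "\<dots> \<le> - (\<tau> + \<eta>0)" by (simp add: \<eta>0_def)
            finally have "((\<alpha> - \<epsilon>) * h - tau_mu \<mu> (q + h) + \<delta>) * real m \<le> - (\<tau> + \<eta>0) * real m"
              by (intro mult_right_mono) auto
            then have "(\<alpha> - \<epsilon>) * real m * h + - (tau_mu \<mu> (q + h) - \<delta>) * real m \<le> - (\<tau> + \<eta>0) * real m"
              by (simp add: algebra_simps)
            then show ?thesis by (intro mult_right_mono) auto
          qed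
          finally have large: "(\<Sum>J\<in>D1. measure \<mu> J powr q) \<le> 2 powr (- (\<tau> + \<eta>0) * real m) * M powr q" .
          have "(\<Sum>J\<in>D2. measure \<mu> J powr q) \<le> (\<Sum>J\<in>D2. \<beta> powr q)"
          proof (rule sum_mono)
            fix J assume "J \<in> D2"
            then have "measure \<mu> J \<le> \<beta>" by (simp add: D2_def)
            then show "measure \<mu> J powr q \<le> \<beta> powr q" using q by (intro powr_mono2) auto
          qed
          also have "\<dots> = real (card D2) * \<beta> powr q" by simp
          also have "\<dots> \<le> real (card D') * \<beta> powr q"
            using card_mono[OF finD, of D2] by (intro mult_right_mono) (auto simp: D2_def)
          also have "\<dots> \<le> 2 powr ((legendre (tau_mu \<mu>) \<alpha> - \<kappa>) * real m) * \<beta> powr q"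
            using card by (intro mult_right_mono) auto
          also have "\<dots> = 2 powr ((legendre (tau_mu \<mu>) \<alpha> - \<kappa>) * real m + - (\<alpha> - \<epsilon>) * real m * q) * M powr q"
            unfolding bq by (simp add: powr_add mult_ac)
          also have "\<dots> \<le> 2 powr (- (\<tau> + \<eta>0) * real m) * M powr q"
          proof -
            have "legendre (tau_mu \<mu>) \<alpha> - \<kappa> - (\<alpha> - \<epsilon>) * q \<le> \<alpha> * q - \<tau> - \<kappa> - (\<alpha> - \<epsilon>) * q"
              using leg by simp
            also have "\<dots> = - (\<tau> + \<kappa> / 2)" using eq by (simp add: algebra_simps)
            also have "\<dots> \<le> - (\<tau> + \<eta>0)" by (simp add: \<eta>0_def)
            finally have "(legendre (tau_mu \<mu>) \<alpha> - \<kappa> - (\<alpha> - \<epsilon>) * q) * real m \<le> - (\<tau> + \<eta>0) * real m"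
              by (intro mult_right_mono) auto
            then have "(legendre (tau_mu \<mu>) \<alpha> - \<kappa>) * real m + - (\<alpha> - \<epsilon>) * real m * q \<le> - (\<tau> + \<eta>0) * real m"
              by (simp add: algebra_simps)
            then show ?thesis by (intro mult_right_mono) auto
          qed
          finally have small: "(\<Sum>J\<in>D2. measure \<mu> J powr q) \<le> 2 powr (- (\<tau> + \<eta>0) * real m) * M powr q" .
          have "(\<Sum>J\<in>D'. measure \<mu> J powr q) \<le> 2 * (2 powr (- (\<tau> + \<eta>0) * real m) * M powr q)"
            unfolding split using large small by simp
          also have "\<dots> = 2 powr (1 + - (\<tau> + \<eta>0) * real m) * M powr q" by (simp add: powr_add)
          also have "\<dots> \<le> 2 powr (- (\<tau> + \<eta>0 / 2) * real m) * M powr q"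
          proof -
            have "2 < \<eta>0 * real M2" using M2 \<eta>0 by (simp add: divide_less_eq mult.commute)
            moreover have "\<eta>0 * real M2 \<le> \<eta>0 * real m" using mM2 \<eta>0 by (intro mult_left_mono) auto
            ultimately have "2 < \<eta>0 * real m" by linarith
            then have "1 + - (\<tau> + \<eta>0) * real m \<le> - (\<tau> + \<eta>0 / 2) * real m" by (simp add: algebra_simps)
            then show ?thesis by (intro mult_right_mono) auto
          qed
          finally show ?thesis by (simp add: M_def \<tau>_def)
        qed
      qed
    qed
  qed
qed

end

theorem proposition3p10:
  fixes \<mu> :: "real measure" and Idx :: "'i set" and p t :: "'i \<Rightarrow> real"
    and lam q \<alpha> :: real
  assumes Idx: "finite Idx" "Idx \<noteq> {}"
    and p_pos: "\<And>i. i \<in> Idx \<Longrightarrow> p i > 0"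
    and p_sum: "(\<Sum>i\<in>Idx. p i) = 1"
    and lam: "0 < lam" "lam < 1"
    and prob: "prob_space \<mu>" and sets: "sets \<mu> = sets borel"
    and inv: "\<And>A. A \<in> sets borel \<Longrightarrow>
               measure \<mu> A = (\<Sum>i\<in>Idx. p i * measure \<mu> ((\<lambda>x. lam * x + t i) -` A))"
    and supp: "measure \<mu> {0..<1} = 1"
    and q: "q > 1"
    and deriv: "(tau_mu \<mu> has_real_derivative \<alpha>) (at q)"
  shows
    "(\<forall>\<kappa>>0. \<exists>\<eta>>0. \<forall>\<^sub>F m in sequentially. \<forall>s::nat. \<forall>I\<in>dyadic s. \<forall>D'.
        D' \<subseteq> {J\<in>dyadic (s + m). J \<subseteq> I} \<and>
        real (card D') \<le> 2 powr ((legendre (tau_mu \<mu>) \<alpha> - \<kappa>) * real m) \<longrightarrow>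
        (\<Sum>J\<in>D'. measure \<mu> J powr q)
          \<le> 2 powr (- (tau_mu \<mu> q + \<eta>) * real m) * measure \<mu> (double_int I) powr q)
     \<and>
     (\<forall>\<delta>>0. \<forall>\<^sub>F m in sequentially. \<forall>s::nat. \<forall>I\<in>dyadic s.
        (\<Sum>J\<in>{J\<in>dyadic (s + m). J \<subseteq> I}. measure \<mu> J powr q)
          \<le> 2 powr (- (tau_mu \<mu> q - \<delta>) * real m) * measure \<mu> (double_int I) powr q)"
proof -
  interpret Wi: wifs \<mu> Idx p t lam
    by (rule wifs.intro[OF Idx p_pos p_sum lam prob sets inv supp])
  show ?thesis using Wi.part_i[OF q deriv] Wi.part_ii[OF q] by blast
qed

end
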